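(* Let $(L,\wedge,\vee,0,1)$ be a bounded lattice with multiplicative Nakano mosaic $(L,\boxdot,1)$, where $x\boxdot y:=\{z\in L\mid x\wedge y=x\wedge z=z\wedge y\}$. For $x,y,z\in L$, we have $z=x\wedge y$ if and only if $x,y\in z\boxdot z$ and $z\in x\boxdot y$. *)

theory Defs
  imports Main
begin

definition nakano_mult :: "'a::bounded_lattice \<Rightarrow> 'a \<Rightarrow> 'a set" where
  "nakano_mult x y = {z. inf x y = inf x z \<and> inf x z = inf z y}"

end

theory Submission
  imports Defs
begin

theorem mainTheorem18:
  fixes x y z :: "'a::bounded_lattice"
  shows "z = inf x y \<longleftrightarrow> (x \<in> nakano_mult z z \<and> y \<in> nakano_mult z z \<and> z \<in> nakano_mult x y)"
proof
  assume z: "z = inf x y"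
  have a: "inf z x = z" "inf x z = z" "inf z y = z" "inf y z = z" "inf z z = z"
    unfolding z by (simp_all add: inf.absorb1 inf.absorb2)
  show "x \<in> nakano_mult z z \<and> y \<in> nakano_mult z z \<and> z \<in> nakano_mult x y"
    unfolding nakano_mult_def using a z by simp
next
  assume h: "x \<in> nakano_mult z z \<and> y \<in> nakano_mult z z \<and> z \<in> nakano_mult x y"
  then have e: "z = inf z x" "z = inf z y" "inf x y = inf x z"
    unfolding nakano_mult_def by simp_all
  then have "inf x z = z" by (metis inf.commute)
  with e show "z = inf x y" by simp
qed

end
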